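(* Let $a,b,c\ge 0$ be integers with $\gcd(a,b,c)=1$ and let $M$ be the list of vectors of $\mathbb{F}_2^2$ consisting of $(1,0)$ with multiplicity $a$, $(0,1)$ with multiplicity $b$ and $(1,1)$ with multiplicity $c$, assumed to generate $\mathbb{F}_2^2$. Let $K=K(G(\mathbb{F}_2^2,M))$. Then $$\operatorname{Syl}_2 K\cong\begin{cases}\mathbb{Z}/2^{v_2(b+c)+1}\mathbb{Z} & a\text{ odd},\ b,c\text{ even},\\ \mathbb{Z}/2^{v_2(a+b)+1}\mathbb{Z} & a,b\text{ odd},\ c\text{ even},\\ \mathbb{Z}/2^{e}\mathbb{Z}\times\mathbb{Z}/2^{f}\mathbb{Z} & a,b,c\text{ odd},\end{cases}$$ where $f=\max(v_2(a+b),v_2(b+c),v_2(a+c))+1$ and $e=v_2(|K|)-f$.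
   Context: For a finite list $M=(v_1,\dots,v_n)$ of nonzero vectors generating $\mathbb{F}_2^r$, the Cayley graph $G(\mathbb{F}_2^r,M)$ has vertex set $\mathbb{F}_2^r$ and Laplacian $L$ indexed by $\mathbb{F}_2^r$ with $L_{u,u}=n$ and $L_{u,w}=-\#\{i:u+v_i=w\}$ for $u\ne w$; $\operatorname{coker}L\cong\mathbb{Z}\oplus K(G)$ with $K(G)$ finite abelian (the sandpile group). $v_2$ denotes the $2$-adic valuation of a nonzero integer. *)

theory Defs
  imports "HOL-Algebra.Elementary_Groups" "HOL-Algebra.Coset"
          "HOL-Computational_Algebra.Primes"
begin

text \<open>Vectors of F_2^2 are pairs of booleans; addition is componentwise xor.\<close>
type_synonym vec2 = "bool \<times> bool"

definition vadd :: "vec2 \<Rightarrow> vec2 \<Rightarrow> vec2" where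
  "vadd u w = (fst u \<noteq> fst w, snd u \<noteq> snd w)"

definition vzero :: vec2 where "vzero = (False, False)"

text \<open>M generates F_2^2: every vector is a sum of elements of M (over F_2 the span
  is the set of sums of sub-lists).\<close>
definition generates :: "vec2 list \<Rightarrow> bool" where
  "generates M \<longleftrightarrow> (\<forall>w. \<exists>xs. set xs \<subseteq> set M \<and> w = foldr vadd xs vzero)"

definition cayley_laplacian :: "vec2 list \<Rightarrow> vec2 \<Rightarrow> vec2 \<Rightarrow> int" where
  "cayley_laplacian M u w =
     (if u = w then int (length M)
      else - int (card {i. i < length M \<and> vadd u (M ! i) = w}))"

definition free_ab :: "('v \<Rightarrow> int) monoid" where
  "free_ab = \<lparr>carrier = UNIV, monoid.mult = (\<lambda>x y v. x v + y v), one = (\<lambda>_. 0)\<rparr>"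

definition lap_image :: "('v::finite \<Rightarrow> 'v \<Rightarrow> int) \<Rightarrow> ('v \<Rightarrow> int) set" where
  "lap_image L = {(\<lambda>u. \<Sum>w\<in>UNIV. L u w * x w) | x. True}"

definition coker :: "('v::finite \<Rightarrow> 'v \<Rightarrow> int) \<Rightarrow> ('v \<Rightarrow> int) set monoid" where
  "coker L = free_ab Mod (lap_image L)"

text \<open>Sandpile group: the torsion subgroup K of coker L (coker L = Z + K).\<close>
definition sandpile_group :: "('v::finite \<Rightarrow> 'v \<Rightarrow> int) \<Rightarrow> ('v \<Rightarrow> int) set monoid" where
  "sandpile_group L = (coker L)\<lparr>carrier :=
     {X \<in> carrier (coker L). \<exists>n::nat. n > 0 \<and> X [^]\<^bsub>coker L\<^esub> n = \<one>\<^bsub>coker L\<^esub>}\<rparr>"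

definition sylow_subgroup :: "nat \<Rightarrow> ('a, 'b) monoid_scheme \<Rightarrow> 'a set \<Rightarrow> bool" where
  "sylow_subgroup p G P \<longleftrightarrow> subgroup P G \<and> card P = p ^ multiplicity p (order G)"

definition M_abc :: "nat \<Rightarrow> nat \<Rightarrow> nat \<Rightarrow> vec2 list" where
  "M_abc a b c = replicate a (True, False) @ replicate b (False, True) @ replicate c (True, True)"

end

theory Submission
  imports Defs "HOL-Algebra.Multiplicative_Group"
begin


lemma UNIV_vec2: "(UNIV::vec2 set) = {(False,False),(True,False),(False,True),(True,True)}"
  by (auto simp: UNIV_bool)

lemma sum_vec2: "(\<Sum>w\<in>UNIV. f w) = f (False,False) + f (True,False) + f (False,True) + (f (True,True) :: 'a::comm_monoid_add)"
  by (simp add: UNIV_vec2 add.assoc)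

definition lapl :: "int \<Rightarrow> int \<Rightarrow> int \<Rightarrow> (vec2 \<Rightarrow> int) \<Rightarrow> vec2 \<Rightarrow> int" where
  "lapl A B C y u = (A+B+C) * y u - A * y (vadd u (True,False)) - B * y (vadd u (False,True)) - C * y (vadd u (True,True))"

lemma vadd_eq: "vadd u v = w \<longleftrightarrow> v = vadd u w"
  by (cases u; cases v; cases w) (auto simp: vadd_def)

lemma cnt_M: "card {i. i < length (M_abc a b c) \<and> vadd u (M_abc a b c ! i) = w} =
   (if vadd u w = (True,False) then a else 0) + (if vadd u w = (False,True) then b else 0) + (if vadd u w = (True,True) then c else 0)"
proof -
  have "card {i. i < length (M_abc a b c) \<and> vadd u (M_abc a b c ! i) = w} = length (filter (\<lambda>v. v = vadd u w) (M_abc a b c))"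
    by (simp add: length_filter_conv_card vadd_eq)
  also have "\<dots> = (if vadd u w = (True,False) then a else 0) + (if vadd u w = (False,True) then b else 0) + (if vadd u w = (True,True) then c else 0)"
    by (auto simp: M_abc_def filter_replicate)
  finally show ?thesis .
qed

lemma lap_eq: "(\<lambda>u. \<Sum>w\<in>UNIV. cayley_laplacian (M_abc a b c) u w * y w) = lapl (int a) (int b) (int c) y"
proof
  fix u :: vec2
  have len: "length (M_abc a b c) = a + b + c" by (simp add: M_abc_def)
  show "(\<Sum>w\<in>UNIV. cayley_laplacian (M_abc a b c) u w * y w) = lapl (int a) (int b) (int c) y u"
    unfolding sum_vec2 cayley_laplacian_def cnt_M
    by (cases u; simp add: len vadd_def lapl_def split: bool.splits; simp add: algebra_simps)
qed



lemma pow2_kill: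
  fixes G (structure) and T (structure)
  assumes gh: "group_hom G T h"
    and hyp: "\<And>x. x \<in> carrier G \<Longrightarrow> h x = \<one>\<^bsub>T\<^esub> \<Longrightarrow> x \<otimes> x = \<one> \<Longrightarrow> x = \<one>"
  shows "z \<in> carrier G \<Longrightarrow> z [^] ((2::nat) ^ k) = \<one> \<Longrightarrow> h z = \<one>\<^bsub>T\<^esub> \<Longrightarrow> z = \<one>"
proof (induction k arbitrary: z)
  case 0
  interpret group_hom G T h by (rule gh)
  show ?case using 0 by simp
next
  case (Suc k)
  interpret group_hom G T h by (rule gh)
  define w where "w = z [^] ((2::nat) ^ k)"
  have wc: "w \<in> carrier G" using Suc.prems w_def by simp
  have "w \<otimes> w = z [^] ((2::nat) ^ k + 2 ^ k)"
    using Suc.prems(1) by (simp add: w_def G.nat_pow_mult)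
  also have "\<dots> = z [^] ((2::nat) ^ Suc k)" by (simp add: mult_2)
  finally have ww: "w \<otimes> w = \<one>" using Suc.prems by simp
  have "h w = (h z) [^]\<^bsub>T\<^esub> ((2::nat)^k)" using Suc.prems(1) unfolding w_def by (rule hom_nat_pow)
  also have "\<dots> = \<one>\<^bsub>T\<^esub>" using Suc.prems(3) by simp
  finally have "h w = \<one>\<^bsub>T\<^esub>" .
  hence "w = \<one>" using hyp wc ww by blast
  hence "z [^] ((2::nat) ^ k) = \<one>" by (simp add: w_def)
  thus ?case by (rule Suc.IH[OF Suc.prems(1) _ Suc.prems(3)])
qed

lemma sylow_iso:
  fixes G (structure) and T (structure)
  assumes grG: "group G" and finG: "finite (carrier G)" and sub: "subgroup P G"
    and cardP: "card P = 2 ^ multiplicity 2 (order G)"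
    and grT: "group T" and hh: "h \<in> hom G T" and surj: "h ` carrier G = carrier T"
    and cardT: "card (carrier T) = 2 ^ m"
    and hyp: "\<And>x. x \<in> carrier G \<Longrightarrow> h x = \<one>\<^bsub>T\<^esub> \<Longrightarrow> x \<otimes> x = \<one> \<Longrightarrow> x = \<one>"
  shows "G\<lparr>carrier := P\<rparr> \<cong> T \<and> m = multiplicity 2 (order G)"
proof -
  interpret G: group G by (rule grG)
  interpret T: group T by (rule grT)
  have ghom: "group_hom G T h" by (simp add: group_hom_def group_hom_axioms_def grG grT hh)
  interpret gh: group_hom G T h by (rule ghom)
  have "G Mod kernel G T h \<cong> T" by (rule gh.FactGroup_iso[OF surj])
  hence c0: "card (carrier (G Mod kernel G T h)) = card (carrier T)"
    by (rule iso_same_card)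
  have c1: "card (rcosets\<^bsub>G\<^esub> kernel G T h) = card (carrier T)"
    using c0 unfolding FactGroup_def by simp
  have "card (rcosets\<^bsub>G\<^esub> kernel G T h) * card (kernel G T h) = order G"
    by (rule G.lagrange[OF gh.subgroup_kernel])
  hence dv: "2 ^ m dvd order G" using c1 cardT by (metis dvd_triv_left)
  have opos: "order G \<noteq> 0" using finG by (simp add: G.order_gt_0_iff_finite[symmetric])
  have mle: "m \<le> multiplicity 2 (order G)"
    using multiplicity_geI[OF opos _ dv] by simp
  have finT: "finite (carrier T)" using surj finG by (metis finite_imageI)
  have PG: "P \<subseteq> carrier G" using sub by (rule subgroup.subset)
  interpret GP: group "G\<lparr>carrier := P\<rparr>" by (rule G.subgroup_imp_group[OF sub])
  have powP: "z [^] card P = \<one>" if "z \<in> P" for z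
  proof -
    have "z [^]\<^bsub>G\<lparr>carrier := P\<rparr>\<^esub> order (G\<lparr>carrier := P\<rparr>) = \<one>\<^bsub>G\<lparr>carrier := P\<rparr>\<^esub>"
      using GP.pow_order_eq_1 that by simp
    thus ?thesis by (simp add: order_def G.nat_pow_consistent[symmetric])
  qed
  have inj: "inj_on h P"
  proof (rule inj_onI)
    fix x y assume xy: "x \<in> P" "y \<in> P" "h x = h y"
    have xc: "x \<in> carrier G" and yc: "y \<in> carrier G" using xy PG by auto
    define z where "z = x \<otimes> inv y"
    have zP: "z \<in> P" using sub xy by (simp add: z_def subgroup.m_closed subgroup.m_inv_closed)
    have zc: "z \<in> carrier G" using zP PG by auto
    have hz: "h z = \<one>\<^bsub>T\<^esub>" using xy xc yc by (simp add: z_def)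
    have "z [^] ((2::nat) ^ multiplicity 2 (order G)) = \<one>" using powP[OF zP] cardP by simp
    hence "z = \<one>" using pow2_kill[OF ghom hyp] zc hz by blast
    have "x = (x \<otimes> inv y) \<otimes> y" using xc yc by (simp add: G.m_assoc)
    thus "x = y" using \<open>z = \<one>\<close> yc by (simp add: z_def)
  qed
  have hP: "h ` P \<subseteq> carrier T" using surj PG by blast
  have le1: "card P \<le> card (carrier T)"
    using card_inj_on_le[OF inj hP finT] .
  have le2: "card (carrier T) \<le> card P"
    using cardP cardT mle by (simp add: power_increasing)
  have eqc: "card P = card (carrier T)" using le1 le2 by simp
  hence mm: "m = multiplicity 2 (order G)" using cardP cardT by simp
  have "card (h ` P) = card (carrier T)" using card_image[OF inj] eqc by simp
  hence img: "h ` P = carrier T" using card_subset_eq[OF finT hP] by simp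
  have bij: "bij_betw h P (carrier T)" using inj img by (simp add: bij_betw_def)
  have "h \<in> hom (G\<lparr>carrier := P\<rparr>) T"
    using hh PG unfolding hom_def by (auto simp: subset_iff)
  hence "h \<in> iso (G\<lparr>carrier := P\<rparr>) T" using bij by (simp add: iso_def)
  hence "G\<lparr>carrier := P\<rparr> \<cong> T" unfolding is_iso_def by blast
  thus ?thesis using mm by simp
qed



lemma fa_carrier [simp]: "carrier free_ab = UNIV" by (simp add: free_ab_def)
lemma fa_mult [simp]: "x \<otimes>\<^bsub>free_ab\<^esub> y = (\<lambda>v. x v + y v)" by (simp add: free_ab_def)
lemma fa_one [simp]: "\<one>\<^bsub>free_ab\<^esub> = (\<lambda>_. 0)" by (simp add: free_ab_def)

lemma fa_comm_group: "comm_group (free_ab :: ('v \<Rightarrow> int) monoid)"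
proof (rule comm_groupI)
  fix x :: "'v \<Rightarrow> int"
  show "\<exists>y\<in>carrier free_ab. y \<otimes>\<^bsub>free_ab\<^esub> x = \<one>\<^bsub>free_ab\<^esub>"
    by (rule bexI[of _ "\<lambda>v. - x v"]) auto
qed (auto simp: algebra_simps)

lemma fa_group: "group (free_ab :: ('v \<Rightarrow> int) monoid)"
  using fa_comm_group comm_group.axioms(2) by blast

lemma fa_inv [simp]: "inv\<^bsub>free_ab\<^esub> x = (\<lambda>v. - x v)"
  by (rule group.inv_equality[OF fa_group]) auto

lemma fa_pow [simp]: "x [^]\<^bsub>free_ab\<^esub> (n::nat) = (\<lambda>v. int n * x v)"
  by (induction n) (auto simp: algebra_simps)

lemma lapl_add: "lapl A B C (\<lambda>v. y v + z v) = (\<lambda>u. lapl A B C y u + lapl A B C z u)"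
  by (auto simp: lapl_def algebra_simps)
lemma lapl_neg: "lapl A B C (\<lambda>v. - y v) = (\<lambda>u. - lapl A B C y u)"
  by (auto simp: lapl_def algebra_simps)
lemma lapl_zero: "lapl A B C (\<lambda>v. 0) = (\<lambda>u. 0)"
  by (auto simp: lapl_def algebra_simps)
lemma lapl_smult: "lapl A B C (\<lambda>v. k * y v) = (\<lambda>u. k * lapl A B C y u)"
  by (auto simp: lapl_def algebra_simps)
lemma lapl_const: "lapl A B C (\<lambda>v. k) = (\<lambda>u. 0)"
  by (auto simp: lapl_def algebra_simps)

lemma lapl_sub: "subgroup (range (lapl A B C)) free_ab"
proof (rule group.subgroupI[OF fa_group])
  show "range (lapl A B C) \<subseteq> carrier free_ab" by simp
  show "range (lapl A B C) \<noteq> {}" by simp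
  fix x y assume "x \<in> range (lapl A B C)" "y \<in> range (lapl A B C)"
  then obtain u w where "x = lapl A B C u" "y = lapl A B C w" by auto
  thus "x \<otimes>\<^bsub>free_ab\<^esub> y \<in> range (lapl A B C)"
    by (simp add: rangeI lapl_add[symmetric])
next
  fix x assume "x \<in> range (lapl A B C)"
  then obtain u where "x = lapl A B C u" by auto
  thus "inv\<^bsub>free_ab\<^esub> x \<in> range (lapl A B C)"
    by (simp add: rangeI lapl_neg[symmetric])
qed

lemma lapl_normal: "range (lapl A B C) \<lhd> free_ab"
  by (rule comm_group.subgroup_imp_normal[OF fa_comm_group lapl_sub])

definition eps :: "(vec2 \<Rightarrow> int) \<Rightarrow> int" where
  "eps x = x (False,False) + x (True,False) + x (False,True) + x (True,True)"

lemma eps_lapl: "eps (lapl A B C y) = 0"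
  by (simp add: eps_def lapl_def vadd_def algebra_simps)

definition Ytor :: "int \<Rightarrow> int \<Rightarrow> int \<Rightarrow> (vec2 \<Rightarrow> int) \<Rightarrow> vec2 \<Rightarrow> int" where
  "Ytor A B C x v = (let p = B + C; q = A + C; r = A + B;
      x1 = x (True,False); x2 = x (False,True); x3 = x (True,True) in
     - (if v = (False,False) then x1*(p*r+p*q) + x2*(q*r+p*q) + x3*(q*r+p*r)
        else if v = (True,False) then x2*(q*r) + x3*(q*r)
        else if v = (False,True) then x1*(p*r) + x3*(p*r)
        else x1*(p*q) + x2*(p*q)))"

lemma tors_witness:
  assumes "eps x = 0"
  shows "(\<lambda>v. (2*(B+C)*(A+C)*(A+B)) * x v) = lapl A B C (Ytor A B C x)"
proof
  fix u :: vec2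
  have x0: "x (False,False) = - x (True,False) - x (False,True) - x (True,True)"
    using assms by (simp add: eps_def)
  show "2*(B+C)*(A+C)*(A+B) * x u = lapl A B C (Ytor A B C x) u"
    apply (cases u)
    apply (rename_tac u1 u2)
    apply (case_tac u1; case_tac u2)
       apply (simp_all add: lapl_def Ytor_def vadd_def x0 Let_def)
       apply (simp_all add: algebra_simps)
    done
qed



context
  fixes A B C :: int
begin

abbreviation "HH \<equiv> range (lapl A B C)"

lemma cos_mult: "(HH #>\<^bsub>free_ab\<^esub> x) <#>\<^bsub>free_ab\<^esub> (HH #>\<^bsub>free_ab\<^esub> y) = HH #>\<^bsub>free_ab\<^esub> (\<lambda>v. x v + y v)"
  using normal.rcos_sum[OF lapl_normal, of x y] by simp

lemma cos_pow: "(HH #>\<^bsub>free_ab\<^esub> x) [^]\<^bsub>free_ab Mod HH\<^esub> (n::nat) = HH #>\<^bsub>free_ab\<^esub> (\<lambda>v. int n * x v)"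
proof (induction n)
  case 0
  have "HH #>\<^bsub>free_ab\<^esub> (\<lambda>v. 0) = HH"
    using group.coset_mult_one[OF fa_group, of HH] by simp
  thus ?case by simp
next
  case (Suc n)
  thus ?case by (simp add: cos_mult algebra_simps)
qed

lemma cos_eq_one: "HH #>\<^bsub>free_ab\<^esub> x = HH \<longleftrightarrow> x \<in> HH"
proof
  assume "HH #>\<^bsub>free_ab\<^esub> x = HH"
  thus "x \<in> HH" using group.rcos_self[OF fa_group, of x HH] lapl_sub by simp
next
  assume "x \<in> HH"
  thus "HH #>\<^bsub>free_ab\<^esub> x = HH" using group.coset_join2[OF fa_group, of x HH] lapl_sub by simp
qed

lemma cos_eq: assumes "(\<lambda>v. x v - y v) \<in> HH" shows "HH #>\<^bsub>free_ab\<^esub> x = HH #>\<^bsub>free_ab\<^esub> y"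
proof -
  have "HH #>\<^bsub>free_ab\<^esub> x = HH #>\<^bsub>free_ab\<^esub> ((\<lambda>v. x v - y v) \<otimes>\<^bsub>free_ab\<^esub> y)" by simp
  also have "\<dots> = (HH #>\<^bsub>free_ab\<^esub> (\<lambda>v. x v - y v)) #>\<^bsub>free_ab\<^esub> y"
    using group.coset_mult_assoc[OF fa_group, of HH "\<lambda>v. x v - y v" y] by simp
  also have "\<dots> = HH #>\<^bsub>free_ab\<^esub> y"
  proof -
    have "HH #>\<^bsub>free_ab\<^esub> (\<lambda>v. x v - y v) = HH" using cos_eq_one assms by blast
    thus ?thesis by simp
  qed
  finally show ?thesis .
qed

definition TS :: "(vec2 \<Rightarrow> int) set set" where
  "TS = {X \<in> carrier (free_ab Mod HH). \<exists>n::nat. n > 0 \<and> X [^]\<^bsub>free_ab Mod HH\<^esub> n = \<one>\<^bsub>free_ab Mod HH\<^esub>}"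

lemma carrier_CK: "carrier (free_ab Mod HH) = range (\<lambda>x. HH #>\<^bsub>free_ab\<^esub> x)"
  by (simp add: carrier_FactGroup)

lemma eps_smult: "eps (\<lambda>v. k * x v) = k * eps x"
  by (simp add: eps_def algebra_simps)

lemma TS_char:
  assumes pos: "(B+C) > 0" "A+C > 0" "A+B > 0"
  shows "TS = (\<lambda>x. HH #>\<^bsub>free_ab\<^esub> x) ` {x. eps x = 0}"
proof (intro equalityI subsetI)
  fix X assume "X \<in> TS"
  then obtain x n where X: "X = HH #>\<^bsub>free_ab\<^esub> x" and n: "n > (0::nat)"
     and "X [^]\<^bsub>free_ab Mod HH\<^esub> n = HH"
    unfolding TS_def carrier_CK by auto
  hence "(\<lambda>v. int n * x v) \<in> HH" using cos_pow cos_eq_one by metis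
  then obtain y where "(\<lambda>v. int n * x v) = lapl A B C y" by auto
  hence "eps (\<lambda>v. int n * x v) = 0" using eps_lapl by metis
  hence "eps x = 0" using n by (simp add: eps_smult)
  thus "X \<in> (\<lambda>x. HH #>\<^bsub>free_ab\<^esub> x) ` {x. eps x = 0}" using X by blast
next
  fix X assume "X \<in> (\<lambda>x. HH #>\<^bsub>free_ab\<^esub> x) ` {x. eps x = 0}"
  then obtain x where X: "X = HH #>\<^bsub>free_ab\<^esub> x" and e: "eps x = 0" by auto
  define N where "N = 2*(B+C)*(A+C)*(A+B)"
  have Npos: "N > 0" using pos by (simp add: N_def)
  have "(\<lambda>v. int (nat N) * x v) \<in> HH" using tors_witness[OF e, of B C A] Npos
    by (simp add: N_def)
  hence "X [^]\<^bsub>free_ab Mod HH\<^esub> (nat N) = \<one>\<^bsub>free_ab Mod HH\<^esub>"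
    using X cos_pow cos_eq_one by simp
  moreover have "nat N > 0" using Npos by simp
  ultimately show "X \<in> TS" unfolding TS_def carrier_CK using X by blast
qed

definition red :: "int \<Rightarrow> (vec2 \<Rightarrow> int) \<Rightarrow> vec2 \<Rightarrow> int" where
  "red N x v = (if v = (False,False) then - (x (True,False) mod N + x (False,True) mod N + x (True,True) mod N) else x v mod N)"

definition mk3 :: "int \<times> int \<times> int \<Rightarrow> vec2 \<Rightarrow> int" where
  "mk3 ijk v = (case ijk of (i,j,k) \<Rightarrow> if v = (False,False) then -(i+j+k) else if v = (True,False) then i else if v = (False,True) then j else k)"

lemma TS_finite:
  assumes pos: "(B+C) > 0" "A+C > 0" "A+B > 0"
  shows "finite TS"
proof -
  define N where "N = 2*(B+C)*(A+C)*(A+B)"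
  have Npos: "N > 0" using pos by (simp add: N_def)
  define Box where "Box = mk3 ` ({0..<N} \<times> {0..<N} \<times> {0..<N})"
  have fin: "finite ((\<lambda>x. HH #>\<^bsub>free_ab\<^esub> x) ` Box)" by (simp add: Box_def)
  have "TS \<subseteq> (\<lambda>x. HH #>\<^bsub>free_ab\<^esub> x) ` Box"
  proof
    fix X assume "X \<in> TS"
    then obtain x where X: "X = HH #>\<^bsub>free_ab\<^esub> x" and e: "eps x = 0"
      using TS_char[OF pos] by auto
    have inbox: "red N x \<in> Box"
    proof -
      have "red N x = mk3 (x (True,False) mod N, x (False,True) mod N, x (True,True) mod N)"
        by (rule ext) (auto simp: red_def mk3_def)
      thus ?thesis using Npos by (simp add: Box_def)
    qed
    define k where "k = (\<lambda>v. (x v - red N x v) div N)"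
    have dk: "(\<lambda>v. x v - red N x v) = (\<lambda>v. N * k v)"
    proof
      fix v
      have x0: "x (False,False) = - x (True,False) - x (False,True) - x (True,True)"
        using e by (simp add: eps_def)
      have "N dvd (x v - red N x v)"
      proof (cases "v = (False,False)")
        case True
        have "x v - red N x v = - (x (True,False) - x (True,False) mod N) - (x (False,True) - x (False,True) mod N)
            - (x (True,True) - x (True,True) mod N)"
          using True x0 by (simp add: red_def)
        have d: "N dvd (w - w mod N)" for w by (simp add: minus_mod_eq_mult_div)
        show ?thesis unfolding \<open>x v - red N x v = _\<close>
          by (intro dvd_diff dvd_minus_iff[THEN iffD2] d)
      next
        case False
        thus ?thesis by (simp add: red_def minus_mod_eq_mult_div[symmetric])
      qed
      thus "x v - red N x v = N * k v" by (simp add: k_def)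
    qed
    have ek: "eps k = 0"
    proof -
      have "eps (\<lambda>v. x v - red N x v) = 0" using e by (simp add: eps_def red_def)
      hence "N * eps k = 0" using dk eps_smult by metis
      thus ?thesis using Npos by simp
    qed
    have "(\<lambda>v. x v - red N x v) \<in> HH"
      using dk tors_witness[OF ek, of B C A] by (simp add: N_def)
    hence "X = HH #>\<^bsub>free_ab\<^esub> red N x" using X cos_eq by simp
    thus "X \<in> (\<lambda>x. HH #>\<^bsub>free_ab\<^esub> x) ` Box" using inbox by blast
  qed
  thus ?thesis using fin finite_subset by blast
qed

lemma TS_sub:
  assumes pos: "(B+C) > 0" "A+C > 0" "A+B > 0"
  shows "subgroup TS (free_ab Mod HH)"
proof (rule group.subgroupI[OF normal.factorgroup_is_group[OF lapl_normal]])
  show "TS \<subseteq> carrier (free_ab Mod HH)" by (auto simp: TS_def)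
  have "eps (\<lambda>v. 0) = 0" by (simp add: eps_def)
  thus "TS \<noteq> {}" using TS_char[OF pos] by blast
next
  fix X assume "X \<in> TS"
  then obtain x where X: "X = HH #>\<^bsub>free_ab\<^esub> x" and e: "eps x = 0"
    using TS_char[OF pos] by auto
  have "inv\<^bsub>free_ab Mod HH\<^esub> X = set_inv\<^bsub>free_ab\<^esub> X"
    using normal.inv_FactGroup[OF lapl_normal] X carrier_CK by blast
  also have "\<dots> = HH #>\<^bsub>free_ab\<^esub> (\<lambda>v. - x v)"
    using normal.rcos_inv[OF lapl_normal, of x] X by simp
  finally have "inv\<^bsub>free_ab Mod HH\<^esub> X = HH #>\<^bsub>free_ab\<^esub> (\<lambda>v. - x v)" .
  moreover have "eps (\<lambda>v. - x v) = 0" using e by (simp add: eps_def)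
  ultimately show "inv\<^bsub>free_ab Mod HH\<^esub> X \<in> TS" using TS_char[OF pos] by auto
next
  fix X Y assume "X \<in> TS" "Y \<in> TS"
  then obtain x y where X: "X = HH #>\<^bsub>free_ab\<^esub> x" and e: "eps x = 0"
    and Y: "Y = HH #>\<^bsub>free_ab\<^esub> y" and e2: "eps y = 0"
    using TS_char[OF pos] by force
  have "X \<otimes>\<^bsub>free_ab Mod HH\<^esub> Y = HH #>\<^bsub>free_ab\<^esub> (\<lambda>v. x v + y v)"
    using X Y cos_mult by simp
  moreover have "eps (\<lambda>v. x v + y v) = 0" using e e2 by (simp add: eps_def)
  ultimately show "X \<otimes>\<^bsub>free_ab Mod HH\<^esub> Y \<in> TS" using TS_char[OF pos] by auto
qed

end



lemma LI: "lap_image (cayley_laplacian (M_abc a b c)) = range (lapl (int a) (int b) (int c))"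
  unfolding lap_image_def lap_eq by auto

lemma KD: "sandpile_group (cayley_laplacian (M_abc a b c)) =
   (free_ab Mod range (lapl (int a) (int b) (int c)))\<lparr>carrier := TS (int a) (int b) (int c)\<rparr>"
  by (simp add: sandpile_group_def coker_def LI TS_def)

lemma Phi_cos:
  fixes T (structure)
  assumes grT: "group T" and hphi: "phi \<in> hom free_ab T"
    and kill: "\<And>y. phi (lapl A B C y) = \<one>\<^bsub>T\<^esub>"
  shows "the_elem (phi ` (range (lapl A B C) #>\<^bsub>free_ab\<^esub> x)) = phi x"
proof -
  have "phi ` (range (lapl A B C) #>\<^bsub>free_ab\<^esub> x) = {phi x}"
  proof -
    have "phi (h \<otimes>\<^bsub>free_ab\<^esub> x) = phi x" if "h \<in> range (lapl A B C)" for h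
    proof -
      have "phi (h \<otimes>\<^bsub>free_ab\<^esub> x) = phi h \<otimes>\<^bsub>T\<^esub> phi x"
        using hom_mult[OF hphi, of h x] by simp
      also have "\<dots> = phi x" using that kill hphi grT
        by (auto simp: hom_def Pi_def group.is_monoid monoid.l_one)
      finally show ?thesis .
    qed
    hence "\<forall>z \<in> range (lapl A B C) #>\<^bsub>free_ab\<^esub> x. phi z = phi x"
      unfolding r_coset_def by blast
    moreover have "x \<in> range (lapl A B C) #>\<^bsub>free_ab\<^esub> x"
      using group.rcos_self[OF fa_group, of x] lapl_sub by simp
    ultimately show ?thesis by blast
  qed
  thus ?thesis by simp
qed

lemma main_generic:
  fixes a b c :: nat and T (structure) and phi
  assumes pos: "b + c > 0" "a + c > 0" "a + b > 0"
    and grT: "group T" and hphi: "phi \<in> hom free_ab T"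
    and kill: "\<And>y. phi (lapl (int a) (int b) (int c) y) = \<one>\<^bsub>T\<^esub>"
    and surj: "\<And>t. t \<in> carrier T \<Longrightarrow> \<exists>x. eps x = 0 \<and> phi x = t"
    and ord2: "\<And>x y. (\<And>u. 2 * x u = lapl (int a) (int b) (int c) y u) \<Longrightarrow> phi x = \<one>\<^bsub>T\<^esub>
                  \<Longrightarrow> x \<in> range (lapl (int a) (int b) (int c))"
    and cardT: "card (carrier T) = 2 ^ m"
    and syl: "sylow_subgroup 2 (sandpile_group (cayley_laplacian (M_abc a b c))) P"
  shows "(sandpile_group (cayley_laplacian (M_abc a b c)))\<lparr>carrier := P\<rparr> \<cong> T
     \<and> m = multiplicity 2 (order (sandpile_group (cayley_laplacian (M_abc a b c))))"
proof -
  define A where "A = int a"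
  define B where "B = int b"
  define C where "C = int c"
  have pos': "B + C > 0" "A + C > 0" "A + B > 0" using pos by (auto simp: A_def B_def C_def)
  define CK where "CK = free_ab Mod range (lapl A B C)"
  define G where "G = CK\<lparr>carrier := TS A B C\<rparr>"
  have KG: "sandpile_group (cayley_laplacian (M_abc a b c)) = G"
    by (simp add: KD G_def CK_def A_def B_def C_def)
  have grCK: "group CK" unfolding CK_def by (rule normal.factorgroup_is_group[OF lapl_normal])
  have grG: "group G" unfolding G_def
    using group.subgroup_imp_group[OF grCK] TS_sub[OF pos'] by (simp add: CK_def)
  have finG: "finite (carrier G)" using TS_finite[OF pos'] by (simp add: G_def)
  have sub: "subgroup P G" and cardP: "card P = 2 ^ multiplicity 2 (order G)"
    using syl by (simp_all add: sylow_subgroup_def KG)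
  define Phi where "Phi X = the_elem (phi ` X)" for X
  have kill': "\<And>y. phi (lapl A B C y) = \<one>\<^bsub>T\<^esub>" using kill by (simp add: A_def B_def C_def)
  have PC: "Phi (range (lapl A B C) #>\<^bsub>free_ab\<^esub> x) = phi x" for x
    unfolding Phi_def by (rule Phi_cos[OF grT hphi kill'])
  have TSc: "TS A B C = (\<lambda>x. range (lapl A B C) #>\<^bsub>free_ab\<^esub> x) ` {x. eps x = 0}"
    by (rule TS_char[OF pos'])
  have phic: "phi x \<in> carrier T" for x using hphi by (auto simp: hom_def)
  have hom: "Phi \<in> hom G T"
  proof (rule homI)
    fix X assume "X \<in> carrier G"
    then obtain x where "X = range (lapl A B C) #>\<^bsub>free_ab\<^esub> x" using TSc by (auto simp: G_def)
    thus "Phi X \<in> carrier T" using PC phic by simp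
  next
    fix X Y assume "X \<in> carrier G" "Y \<in> carrier G"
    then obtain x y where X: "X = range (lapl A B C) #>\<^bsub>free_ab\<^esub> x"
       and Y: "Y = range (lapl A B C) #>\<^bsub>free_ab\<^esub> y" using TSc by (force simp: G_def)
    have "X \<otimes>\<^bsub>G\<^esub> Y = range (lapl A B C) #>\<^bsub>free_ab\<^esub> (x \<otimes>\<^bsub>free_ab\<^esub> y)"
      using X Y cos_mult by (simp add: G_def CK_def)
    thus "Phi (X \<otimes>\<^bsub>G\<^esub> Y) = Phi X \<otimes>\<^bsub>T\<^esub> Phi Y" using X Y PC hom_mult[OF hphi, of x y] by simp
  qed
  have surjG: "Phi ` carrier G = carrier T"
  proof (intro equalityI subsetI)
    fix t assume "t \<in> Phi ` carrier G"
    thus "t \<in> carrier T" using hom by (auto simp: hom_def)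
  next
    fix t assume "t \<in> carrier T"
    then obtain x where "eps x = 0" "phi x = t" using surj by blast
    hence "range (lapl A B C) #>\<^bsub>free_ab\<^esub> x \<in> carrier G" "Phi (range (lapl A B C) #>\<^bsub>free_ab\<^esub> x) = t"
      using TSc PC by (auto simp: G_def)
    thus "t \<in> Phi ` carrier G" by blast
  qed
  have hyp: "X = \<one>\<^bsub>G\<^esub>" if "X \<in> carrier G" "Phi X = \<one>\<^bsub>T\<^esub>" "X \<otimes>\<^bsub>G\<^esub> X = \<one>\<^bsub>G\<^esub>" for X
  proof -
    have "X \<in> TS A B C" using that(1) by (simp add: G_def)
    then obtain x where X: "X = range (lapl A B C) #>\<^bsub>free_ab\<^esub> x" using TSc by blast
    have "range (lapl A B C) #>\<^bsub>free_ab\<^esub> (\<lambda>v. x v + x v) = range (lapl A B C)"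
      using that(3) X cos_mult by (simp add: G_def CK_def)
    hence "(\<lambda>v. x v + x v) \<in> range (lapl A B C)" using cos_eq_one by blast
    then obtain y where y: "(\<lambda>v. x v + x v) = lapl A B C y" by auto
    have "\<And>u. 2 * x u = lapl (int a) (int b) (int c) y u"
      using y by (metis A_def B_def C_def mult_2)
    moreover have "phi x = \<one>\<^bsub>T\<^esub>" using that(2) X PC by simp
    ultimately have "x \<in> range (lapl A B C)" using ord2 by (simp add: A_def B_def C_def)
    hence "X = range (lapl A B C)" using X cos_eq_one by blast
    thus ?thesis by (simp add: G_def CK_def)
  qed
  have "G\<lparr>carrier := P\<rparr> \<cong> T \<and> m = multiplicity 2 (order G)"
    by (rule sylow_iso[OF grG finG sub cardP grT hom surjG cardT hyp])
  thus ?thesis using KG by simp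
qed



definition ss :: "(vec2 \<Rightarrow> int) \<Rightarrow> int" where "ss x = x (False,True) + x (True,True)"
definition tt :: "(vec2 \<Rightarrow> int) \<Rightarrow> int" where "tt x = x (True,False) + x (True,True)"
definition zz :: "(vec2 \<Rightarrow> int) \<Rightarrow> int" where "zz x = x (True,False) + x (False,True)"
definition XX :: "(vec2 \<Rightarrow> int) \<Rightarrow> int" where "XX y = y (False,True) + y (True,True) - y (False,False) - y (True,False)"
definition YY :: "(vec2 \<Rightarrow> int) \<Rightarrow> int" where "YY y = y (True,False) + y (True,True) - y (False,False) - y (False,True)"
definition ZZ :: "(vec2 \<Rightarrow> int) \<Rightarrow> int" where "ZZ y = y (True,False) + y (False,True) - y (False,False) - y (True,True)"

lemma ss_lapl: "ss (lapl A B C y) = (B + C) * XX y"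
  by (simp add: ss_def XX_def lapl_def vadd_def algebra_simps)
lemma tt_lapl: "tt (lapl A B C y) = (A + C) * YY y"
  by (simp add: tt_def YY_def lapl_def vadd_def algebra_simps)
lemma zz_lapl: "zz (lapl A B C y) = (A + B) * ZZ y"
  by (simp add: zz_def ZZ_def lapl_def vadd_def algebra_simps)

lemma ss_add: "ss (\<lambda>v. x v + x' v) = ss x + ss x'" by (simp add: ss_def)
lemma tt_add: "tt (\<lambda>v. x v + x' v) = tt x + tt x'" by (simp add: tt_def)
lemma zz_add: "zz (\<lambda>v. x v + x' v) = zz x + zz x'" by (simp add: zz_def)

lemma XY_par: "even (XX y - YY y)" 
proof -
  have "XX y - YY y = 2 * (y (False,True) - y (True,False))" by (simp add: XX_def YY_def)
  thus ?thesis by simp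
qed
lemma XZ_par: "even (XX y - ZZ y)"
proof -
  have "XX y - ZZ y = 2 * (y (True,True) - y (True,False))" by (simp add: XX_def ZZ_def)
  thus ?thesis by simp
qed

lemma stz_par: "even (ss x + tt x + zz x)"
proof -
  have "ss x + tt x + zz x = 2 * (x (True,False) + x (False,True) + x (True,True))"
    by (simp add: ss_def tt_def zz_def)
  thus ?thesis by simp
qed

lemma stz_surj:
  assumes "even (s + t + z)"
  shows "\<exists>x. eps x = 0 \<and> ss x = s \<and> tt x = t \<and> zz x = z"
proof -
  obtain m where m: "s + t + z = 2 * m" using assms by blast
  define x where "x = mk3 (m - s, m - t, m - z)"
  have "eps x = 0" by (simp add: x_def eps_def mk3_def)
  moreover have "ss x = s" "tt x = t" "zz x = z" using m by (simp_all add: x_def ss_def tt_def zz_def mk3_def)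
  ultimately show ?thesis by blast
qed

lemma four_dvd_2: "even (w::int) \<Longrightarrow> 4 dvd (2 * w)" by (auto elim!: evenE)

lemma four_dvd_sum: "4 dvd ((a::int) - b) \<Longrightarrow> even a \<Longrightarrow> 4 dvd (a + b)"
proof -
  assume h: "4 dvd (a - b)" "even a"
  have "a + b = 2 * a - (a - b)" by simp
  thus ?thesis using four_dvd_2[OF h(2)] h(1) by (metis dvd_diff)
qed

lemma y_const:
  assumes x2: "\<And>u. 2 * x u = lapl A B C y u"
    and ev: "even (XX y)" "even (YY y)" "even (ZZ y)"
    and d: "4 dvd (XX y - YY y)" "4 dvd (XX y - ZZ y)"
  shows "x \<in> range (lapl A B C)"
proof -
  have "YY y - ZZ y = (XX y - ZZ y) - (XX y - YY y)" by simp
  hence d3: "4 dvd (YY y - ZZ y)" using d dvd_diff by metis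
  have e: "even (y v - y (False,False))" for v
  proof -
    have "4 dvd (YY y + ZZ y)" using four_dvd_sum[OF d3 ev(2)] .
    moreover have "YY y + ZZ y = 2 * (y (True,False) - y (False,False))" by (simp add: YY_def ZZ_def)
    ultimately have e1: "even (y (True,False) - y (False,False))" by presburger
    have "4 dvd (XX y + ZZ y)" using four_dvd_sum[OF d(2) ev(1)] .
    moreover have "XX y + ZZ y = 2 * (y (False,True) - y (False,False))" by (simp add: XX_def ZZ_def)
    ultimately have e2: "even (y (False,True) - y (False,False))" by presburger
    have "4 dvd (XX y + YY y)" using four_dvd_sum[OF d(1) ev(1)] .
    moreover have "XX y + YY y = 2 * (y (True,True) - y (False,False))" by (simp add: XX_def YY_def)
    ultimately have e3: "even (y (True,True) - y (False,False))" by presburger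
    obtain v1 v2 where "v = (v1,v2)" by (cases v)
    thus ?thesis using e1 e2 e3 by (cases v1; cases v2) auto
  qed
  define y' where "y' = (\<lambda>v. (y v - y (False,False)) div 2)"
  have yy: "(\<lambda>v. 2 * y' v) = (\<lambda>v. y v + (- y (False,False)))"
    using e by (auto simp: y'_def)
  have "x = lapl A B C y'"
  proof
    fix u
    have "2 * lapl A B C y' u = lapl A B C (\<lambda>v. 2 * y' v) u" using lapl_smult by metis
    also have "\<dots> = lapl A B C y u + lapl A B C (\<lambda>v. - y (False,False)) u"
      unfolding yy lapl_add by simp
    also have "\<dots> = lapl A B C y u" by (simp add: lapl_const)
    finally show "x u = lapl A B C y' u" using x2[of u] by simp
  qed
  thus ?thesis by simp
qed

lemma card_imod: "card (carrier (integer_mod_group (2^k))) = 2^k"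
  by (simp add: carrier_integer_mod_group)

lemma form_hom:
  fixes F :: "(vec2 \<Rightarrow> int) \<Rightarrow> int"
  assumes lin: "\<And>x x'. F (\<lambda>v. x v + x' v) = F x + F x'" and M: "M > 0"
  shows "(\<lambda>x. F x mod int M) \<in> hom free_ab (integer_mod_group M)"
proof (rule homI)
  fix x show "F x mod int M \<in> carrier (integer_mod_group M)" using M by (simp add: carrier_integer_mod_group)
next
  fix x y :: "vec2 \<Rightarrow> int"
  show "F (x \<otimes>\<^bsub>free_ab\<^esub> y) mod int M = (F x mod int M) \<otimes>\<^bsub>integer_mod_group M\<^esub> (F y mod int M)"
    by (simp add: lin mod_add_eq)
qed



lemma pow_split: "j \<le> k \<Longrightarrow> (2::int)^(k-j) * 2^j = 2^k"
  by (simp add: power_add[symmetric])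

lemma form_kill:
  fixes u' w' A B :: int and k j :: nat
  assumes "j \<le> k" "even (A - B)" "odd u'" "odd w'"
  shows "2^(k+1) dvd (2^k*u')*A + 2^(k-j) * ((2^j*w')*B)"
proof -
  have "(2^k*u')*A + 2^(k-j) * ((2^j*w')*B) = 2^k*u'*A + (2^(k-j)*2^j)*w'*B" by (simp add: algebra_simps)
  also have "\<dots> = 2^k*(u'*A + w'*B)" using pow_split[OF assms(1)] by (simp add: algebra_simps)
  finally have eq: "(2^k*u')*A + 2^(k-j) * ((2^j*w')*B) = 2^k * (u'*A + w'*B)" .
  have "even (u'*A + w'*B)" using assms(2-4) by auto
  then obtain m where "u'*A + w'*B = 2*m" by blast
  thus ?thesis unfolding eq by simp
qed

lemma form_ord2:
  fixes u' w' A B M Ov :: int and k j :: nat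
  assumes "j \<le> k" "odd u'" "odd w'" "2*M = (2^k*u')*A" "2*Ov = (2^j*w')*B" "even A" "even B"
    "2^(k+1) dvd M + 2^(k-j)*Ov"
  shows "4 dvd A - B"
proof -
  have "2*(M + 2^(k-j)*Ov) = 2*M + 2^(k-j)*(2*Ov)" by (simp add: algebra_simps)
  also have "\<dots> = 2^k*u'*A + (2^(k-j)*2^j)*w'*B" using assms(4,5) by (simp add: algebra_simps)
  also have "\<dots> = 2^k*(u'*A + w'*B)" using pow_split[OF assms(1)] by (simp add: algebra_simps)
  finally have eq: "2*(M + 2^(k-j)*Ov) = 2^k * (u'*A + w'*B)" .
  have "2 * 2^(k+1) dvd 2*(M + 2^(k-j)*Ov)" using assms(8) by (rule mult_dvd_mono[OF dvd_refl])
  hence "2^k * 4 dvd 2^k * (u'*A + w'*B)" unfolding eq by (simp add: power_add mult_ac)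
  hence d4: "4 dvd u'*A + w'*B" by (subst (asm) dvd_mult_cancel_left) simp
  obtain A' B' where AB: "A = 2*A'" "B = 2*B'" using assms(6,7) by (auto elim!: evenE)
  have "2 * 2 dvd 2 * (u'*A' + w'*B')" using d4 AB by (simp add: algebra_simps)
  hence "even (u'*A' + w'*B')" by (subst (asm) dvd_mult_cancel_left) simp
  hence "even (A' - B')" using assms(2,3) by auto
  then obtain m where "A' - B' = 2*m" by blast
  thus ?thesis using AB by (simp add: algebra_simps)
qed



definition good3 :: "nat \<Rightarrow> nat \<Rightarrow> nat \<Rightarrow> ((vec2 \<Rightarrow> int) \<Rightarrow> int) \<Rightarrow> ((vec2 \<Rightarrow> int) \<Rightarrow> int)
   \<Rightarrow> ((vec2 \<Rightarrow> int) \<Rightarrow> int) \<Rightarrow> ((vec2 \<Rightarrow> int) \<Rightarrow> int) \<Rightarrow> ((vec2 \<Rightarrow> int) \<Rightarrow> int)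
   \<Rightarrow> ((vec2 \<Rightarrow> int) \<Rightarrow> int) \<Rightarrow> int \<Rightarrow> int \<Rightarrow> int \<Rightarrow> bool" where
  "good3 a b c S1 S2 S3 X1 X2 X3 p1 p2 p3 \<longleftrightarrow>
     (\<forall>x x'. S1 (\<lambda>v. x v + x' v) = S1 x + S1 x' \<and> S2 (\<lambda>v. x v + x' v) = S2 x + S2 x'
        \<and> S3 (\<lambda>v. x v + x' v) = S3 x + S3 x') \<and>
     (\<forall>y. S1 (lapl (int a) (int b) (int c) y) = p1 * X1 y \<and> S2 (lapl (int a) (int b) (int c) y) = p2 * X2 y
        \<and> S3 (lapl (int a) (int b) (int c) y) = p3 * X3 y) \<and>
     (\<forall>y. even (X1 y - X2 y) \<and> even (X1 y - X3 y)) \<and>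
     (\<forall>x. even (S1 x + S2 x + S3 x)) \<and>
     (\<forall>s1 s2 s3. even (s1 + s2 + s3) \<longrightarrow> (\<exists>x. eps x = 0 \<and> S1 x = s1 \<and> S2 x = s2 \<and> S3 x = s3)) \<and>
     (\<forall>x y. (\<forall>u. 2 * x u = lapl (int a) (int b) (int c) y u) \<longrightarrow> even (X1 y) \<longrightarrow> even (X2 y) \<longrightarrow> even (X3 y)
        \<longrightarrow> 4 dvd (X1 y - X2 y) \<longrightarrow> 4 dvd (X1 y - X3 y) \<longrightarrow> x \<in> range (lapl (int a) (int b) (int c)))"

lemma good3_base: "good3 a b c ss tt zz XX YY ZZ (int b + int c) (int a + int c) (int a + int b)"
  unfolding good3_def
proof (intro conjI allI impI)
  fix x y :: "vec2 \<Rightarrow> int"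
  assume "\<forall>u. 2 * x u = lapl (int a) (int b) (int c) y u" "even (XX y)" "even (YY y)" "even (ZZ y)"
    "4 dvd XX y - YY y" "4 dvd XX y - ZZ y"
  thus "x \<in> range (lapl (int a) (int b) (int c))" using y_const by blast
next
  fix s1 s2 s3 :: int assume "even (s1 + s2 + s3)"
  thus "\<exists>x. eps x = 0 \<and> ss x = s1 \<and> tt x = s2 \<and> zz x = s3" by (rule stz_surj)
qed (simp_all only: ss_add tt_add zz_add ss_lapl tt_lapl zz_lapl XY_par XZ_par stz_par)

lemma good3_swap23:
  assumes g: "good3 a b c S1 S2 S3 X1 X2 X3 p1 p2 p3"
  shows "good3 a b c S1 S3 S2 X1 X3 X2 p1 p3 p2"
proof -
  note G = g[unfolded good3_def]
  have c1: "\<forall>x x'. S1 (\<lambda>v. x v + x' v) = S1 x + S1 x' \<and> S3 (\<lambda>v. x v + x' v) = S3 x + S3 x'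
        \<and> S2 (\<lambda>v. x v + x' v) = S2 x + S2 x'" using G by blast
  have c2: "\<forall>y. S1 (lapl (int a) (int b) (int c) y) = p1 * X1 y \<and> S3 (lapl (int a) (int b) (int c) y) = p3 * X3 y
        \<and> S2 (lapl (int a) (int b) (int c) y) = p2 * X2 y" using G by blast
  have c3: "\<forall>y. even (X1 y - X3 y) \<and> even (X1 y - X2 y)" using G by blast
  have c4: "\<forall>x. even (S1 x + S3 x + S2 x)"
  proof
    fix x have "even (S1 x + S2 x + S3 x)" using G by blast
    moreover have "S1 x + S3 x + S2 x = S1 x + S2 x + S3 x" by (simp add: add_ac)
    ultimately show "even (S1 x + S3 x + S2 x)" by metis
  qed
  have c5: "\<forall>s1 s2 s3. even (s1 + s2 + s3) \<longrightarrow> (\<exists>x. eps x = 0 \<and> S1 x = s1 \<and> S3 x = s2 \<and> S2 x = s3)"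
  proof (intro allI impI)
    fix s1 s2 s3 :: int assume "even (s1 + s2 + s3)"
    hence "even (s1 + s3 + s2)" by (simp add: add_ac)
    thus "\<exists>x. eps x = 0 \<and> S1 x = s1 \<and> S3 x = s2 \<and> S2 x = s3" using G by blast
  qed
  have c6: "\<forall>x y. (\<forall>u. 2 * x u = lapl (int a) (int b) (int c) y u) \<longrightarrow> even (X1 y) \<longrightarrow> even (X3 y) \<longrightarrow> even (X2 y)
        \<longrightarrow> 4 dvd (X1 y - X3 y) \<longrightarrow> 4 dvd (X1 y - X2 y) \<longrightarrow> x \<in> range (lapl (int a) (int b) (int c))"
    using G by blast
  show ?thesis unfolding good3_def using c1 c2 c3 c4 c5 c6 by blast
qed

lemma good3_swap12:
  assumes g: "good3 a b c S1 S2 S3 X1 X2 X3 p1 p2 p3"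
  shows "good3 a b c S2 S1 S3 X2 X1 X3 p2 p1 p3"
proof -
  note G = g[unfolded good3_def]
  have c1: "\<forall>x x'. S2 (\<lambda>v. x v + x' v) = S2 x + S2 x' \<and> S1 (\<lambda>v. x v + x' v) = S1 x + S1 x'
        \<and> S3 (\<lambda>v. x v + x' v) = S3 x + S3 x'" using G by blast
  have c2: "\<forall>y. S2 (lapl (int a) (int b) (int c) y) = p2 * X2 y \<and> S1 (lapl (int a) (int b) (int c) y) = p1 * X1 y
        \<and> S3 (lapl (int a) (int b) (int c) y) = p3 * X3 y" using G by blast
  have c3: "\<forall>y. even (X2 y - X1 y) \<and> even (X2 y - X3 y)"
  proof
    fix y
    have "even (X1 y - X2 y)" "even (X1 y - X3 y)" using G by blast+
    moreover have "X2 y - X1 y = - (X1 y - X2 y)" "X2 y - X3 y = (X1 y - X3 y) - (X1 y - X2 y)" by simp_all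
    ultimately show "even (X2 y - X1 y) \<and> even (X2 y - X3 y)" by simp
  qed
  have c4: "\<forall>x. even (S2 x + S1 x + S3 x)"
  proof
    fix x have "even (S1 x + S2 x + S3 x)" using G by blast
    moreover have "S2 x + S1 x + S3 x = S1 x + S2 x + S3 x" by (simp add: add_ac)
    ultimately show "even (S2 x + S1 x + S3 x)" by metis
  qed
  have c5: "\<forall>s1 s2 s3. even (s1 + s2 + s3) \<longrightarrow> (\<exists>x. eps x = 0 \<and> S2 x = s1 \<and> S1 x = s2 \<and> S3 x = s3)"
  proof (intro allI impI)
    fix s1 s2 s3 :: int assume "even (s1 + s2 + s3)"
    hence "even (s2 + s1 + s3)" by (simp add: add_ac)
    thus "\<exists>x. eps x = 0 \<and> S2 x = s1 \<and> S1 x = s2 \<and> S3 x = s3" using G by blast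
  qed
  have c6: "\<forall>x y. (\<forall>u. 2 * x u = lapl (int a) (int b) (int c) y u) \<longrightarrow> even (X2 y) \<longrightarrow> even (X1 y) \<longrightarrow> even (X3 y)
        \<longrightarrow> 4 dvd (X2 y - X1 y) \<longrightarrow> 4 dvd (X2 y - X3 y) \<longrightarrow> x \<in> range (lapl (int a) (int b) (int c))"
  proof (intro allI impI)
    fix x y
    assume h: "\<forall>u. 2 * x u = lapl (int a) (int b) (int c) y u" "even (X2 y)" "even (X1 y)" "even (X3 y)"
      "4 dvd (X2 y - X1 y)" "4 dvd (X2 y - X3 y)"
    have e1: "X1 y - X2 y = - (X2 y - X1 y)" and e2: "X1 y - X3 y = (X2 y - X3 y) - (X2 y - X1 y)" by simp_all
    have "4 dvd (X1 y - X2 y)" using e1 h(5) dvd_minus_iff by metis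
    moreover have "4 dvd (X1 y - X3 y)" unfolding e2 using h(5,6) by (rule dvd_diff[rotated])
    ultimately have "4 dvd (X1 y - X2 y)" "4 dvd (X1 y - X3 y)" by blast+
    thus "x \<in> range (lapl (int a) (int b) (int c))" using G h by blast
  qed
  show ?thesis unfolding good3_def using c1 c2 c3 c4 c5 c6 by blast
qed



lemma par_lemma:
  fixes q r Y Z :: int
  assumes "odd q" "odd r" "even Y" "even Z" "4 dvd q*Y + r*Z"
  shows "4 dvd Y - Z"
proof -
  obtain Y' Z' where YZ: "Y = 2*Y'" "Z = 2*Z'" using assms(3,4) by (auto elim!: evenE)
  have "2 * 2 dvd 2 * (q*Y' + r*Z')" using assms(5) YZ by (simp add: algebra_simps)
  hence "even (q*Y' + r*Z')" by (subst (asm) dvd_mult_cancel_left) simp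
  hence "even (Y' - Z')" using assms(1,2) by auto
  then obtain m where "Y' - Z' = 2*m" by blast
  thus ?thesis using YZ by (simp add: algebra_simps)
qed

lemma twice_S:
  fixes S :: "(vec2 \<Rightarrow> int) \<Rightarrow> int" and x L :: "vec2 \<Rightarrow> int"
  assumes lin: "\<And>x x'. S (\<lambda>v. x v + x' v) = S x + S x'" and x2: "\<And>u. 2 * x u = L u"
  shows "2 * S x = S L"
proof -
  have "L = (\<lambda>v. x v + x v)"
  proof
    fix u have "2 * x u = L u" by (rule x2)
    thus "L u = x u + x u" by linarith
  qed
  hence "S L = S x + S x" by (simp only: lin)
  thus ?thesis by simp
qed

lemma case1_gen:
  fixes a b c :: nat and u' p2 p3 :: int and k :: nat
  assumes g: "good3 a b c S1 S2 S3 X1 X2 X3 (2^k*u') p2 p3"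
    and k1: "k \<ge> 1" and odd: "odd u'" "odd p2" "odd p3"
    and pos: "b + c > 0" "a + c > 0" "a + b > 0"
    and syl: "sylow_subgroup 2 (sandpile_group (cayley_laplacian (M_abc a b c))) P"
  shows "(sandpile_group (cayley_laplacian (M_abc a b c)))\<lparr>carrier := P\<rparr> \<cong> integer_mod_group (2^(k+1))"
proof -
  note G = g[unfolded good3_def]
  let ?L = "lapl (int a) (int b) (int c)"
  have lin1: "\<And>x x'. S1 (\<lambda>v. x v + x' v) = S1 x + S1 x'" using G by blast
  have lin2: "\<And>x x'. S2 (\<lambda>v. x v + x' v) = S2 x + S2 x'" using G by blast
  have lin3: "\<And>x x'. S3 (\<lambda>v. x v + x' v) = S3 x + S3 x'" using G by blast
  have sl1: "\<And>y. S1 (?L y) = (2^k*u') * X1 y" using G by blast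
  have sl2: "\<And>y. S2 (?L y) = p2 * X2 y" using G by blast
  have sl3: "\<And>y. S3 (?L y) = p3 * X3 y" using G by blast
  have xp: "\<And>y. even (X1 y - X2 y)" "\<And>y. even (X1 y - X3 y)" using G by blast+
  have sp: "\<And>x. even (S1 x + S2 x + S3 x)" using G by blast
  have ssurj: "\<And>s1 s2 s3. even (s1 + s2 + s3) \<Longrightarrow> \<exists>x. eps x = 0 \<and> S1 x = s1 \<and> S2 x = s2 \<and> S3 x = s3"
    using G by blast
  have yc: "\<And>x y. (\<And>u. 2 * x u = ?L y u) \<Longrightarrow> even (X1 y) \<Longrightarrow> even (X2 y) \<Longrightarrow> even (X3 y)
        \<Longrightarrow> 4 dvd (X1 y - X2 y) \<Longrightarrow> 4 dvd (X1 y - X3 y) \<Longrightarrow> x \<in> range ?L"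
    using G by blast
  define F where "F x = S1 x + 2^k * S2 x" for x
  define phi where "phi x = F x mod int (2^(k+1))" for x
  have linF: "\<And>x x'. F (\<lambda>v. x v + x' v) = F x + F x'" by (simp add: F_def lin1 lin2 algebra_simps)
  have hphi: "phi \<in> hom free_ab (integer_mod_group (2^(k+1)))"
    unfolding phi_def by (rule form_hom[OF linF]) simp
  have kill: "phi (?L y) = \<one>\<^bsub>integer_mod_group (2^(k+1))\<^esub>" for y
  proof -
    have "2^(k+1) dvd (2^k*u')*X1 y + 2^(k-0) * ((2^0*p2)*X2 y)"
      by (rule form_kill) (use xp odd in auto)
    hence "2^(k+1) dvd F (?L y)" by (simp add: F_def sl1 sl2)
    thus ?thesis by (simp add: phi_def)
  qed
  have surj: "\<exists>x. eps x = 0 \<and> phi x = t" if "t \<in> carrier (integer_mod_group (2^(k+1)))" for t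
  proof -
    have t: "0 \<le> t" "t < 2^(k+1)" using that by (auto simp: carrier_integer_mod_group)
    obtain x where x: "eps x = 0" "S1 x = t" "S2 x = 0" "S3 x = t" using ssurj[of t 0 t] by auto
    have "phi x = t" using t x by (simp add: phi_def F_def)
    thus ?thesis using x by blast
  qed
  have ord2: "x \<in> range ?L" if x2: "\<And>u. 2 * x u = ?L y u" and px: "phi x = \<one>\<^bsub>integer_mod_group (2^(k+1))\<^esub>" for x y
  proof -
    have e1: "2 * S1 x = (2^k*u') * X1 y" using twice_S[of S1 x "?L y", OF lin1 x2] sl1 by simp
    have e2: "2 * S2 x = p2 * X2 y" using twice_S[of S2 x "?L y", OF lin2 x2] sl2 by simp
    have e3: "2 * S3 x = p3 * X3 y" using twice_S[of S3 x "?L y", OF lin3 x2] sl3 by simp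
    have ev2: "even (X2 y)" using e2 odd(2) by (metis even_mult_iff dvd_triv_left)
    have ev3: "even (X3 y)" using e3 odd(3) by (metis even_mult_iff dvd_triv_left)
    have ev1: "even (X1 y)" using xp(1)[of y] ev2 by simp
    have dF: "2^(k+1) dvd F x" using px by (simp add: phi_def mod_eq_0_iff_dvd)
    have d12: "4 dvd X1 y - X2 y"
      by (rule form_ord2[of 0 k u' p2 "S1 x" "X1 y" "S2 x" "X2 y"]) (use odd e1 e2 ev1 ev2 dF in \<open>simp_all add: F_def\<close>)
    obtain m where "S1 x + S2 x + S3 x = 2 * m" using sp[of x] by blast
    hence "2 * (S1 x + S2 x + S3 x) = 4 * m" by simp
    hence "4 dvd 2 * (S1 x + S2 x + S3 x)" by (metis dvd_triv_left)
    hence s4: "4 dvd (2^k*u') * X1 y + p2 * X2 y + p3 * X3 y" using e1 e2 e3 by (simp add: algebra_simps)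
    obtain X1' where X1': "X1 y = 2 * X1'" using ev1 by blast
    obtain k' where k': "k = Suc k'" using k1 by (cases k) auto
    have "(2^k*u') * X1 y = 4 * (2^k' * u' * X1')" using X1' k' by (simp add: algebra_simps)
    hence "4 dvd (2^k*u') * X1 y" by (metis dvd_triv_left)
    hence "4 dvd p2 * X2 y + p3 * X3 y" using s4 by (metis add.assoc dvd_add_right_iff)
    hence d23: "4 dvd X2 y - X3 y" using par_lemma odd(2,3) ev2 ev3 by blast
    have "X1 y - X3 y = (X1 y - X2 y) + (X2 y - X3 y)" by simp
    hence d13: "4 dvd X1 y - X3 y" using d12 d23 by (metis dvd_add)
    show ?thesis by (rule yc[OF x2 ev1 ev2 ev3 d12 d13])
  qed
  have "(sandpile_group (cayley_laplacian (M_abc a b c)))\<lparr>carrier := P\<rparr> \<cong> integer_mod_group (2^(k+1))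
     \<and> k + 1 = multiplicity 2 (order (sandpile_group (cayley_laplacian (M_abc a b c))))"
    by (rule main_generic[OF pos group_integer_mod_group hphi kill surj ord2 card_imod syl])
  thus ?thesis by (rule conjunct1)
qed



lemma case3_gen:
  fixes a b c :: nat and P1 q2 q3 :: int and k2 k3 :: nat
  assumes g: "good3 a b c S1 S2 S3 X1 X2 X3 (2*P1) (2^k2*q2) (2^k3*q3)"
    and k: "k2 \<ge> 1" "k3 \<ge> 1" and odd: "odd P1" "odd q2" "odd q3"
    and oddsum: "odd (P1 + 2^(k2-1)*q2 + 2^(k3-1)*q3)"
    and pos: "b + c > 0" "a + c > 0" "a + b > 0"
    and syl: "sylow_subgroup 2 (sandpile_group (cayley_laplacian (M_abc a b c))) P"
  shows "(sandpile_group (cayley_laplacian (M_abc a b c)))\<lparr>carrier := P\<rparr> \<cong>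
           integer_mod_group (2^(k2+1)) \<times>\<times> integer_mod_group (2^(k3+1))
     \<and> (k2+1) + (k3+1) = multiplicity 2 (order (sandpile_group (cayley_laplacian (M_abc a b c))))"
proof -
  note G = g[unfolded good3_def]
  let ?L = "lapl (int a) (int b) (int c)"
  let ?T = "integer_mod_group (2^(k2+1)) \<times>\<times> integer_mod_group (2^(k3+1))"
  have lin1: "\<And>x x'. S1 (\<lambda>v. x v + x' v) = S1 x + S1 x'" using G by blast
  have lin2: "\<And>x x'. S2 (\<lambda>v. x v + x' v) = S2 x + S2 x'" using G by blast
  have lin3: "\<And>x x'. S3 (\<lambda>v. x v + x' v) = S3 x + S3 x'" using G by blast
  have sl1: "\<And>y. S1 (?L y) = (2*P1) * X1 y" using G by blast
  have sl2: "\<And>y. S2 (?L y) = (2^k2*q2) * X2 y" using G by blast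
  have sl3: "\<And>y. S3 (?L y) = (2^k3*q3) * X3 y" using G by blast
  have xp: "\<And>y. even (X1 y - X2 y)" "\<And>y. even (X1 y - X3 y)" using G by blast+
  have xp': "\<And>y. even (X2 y - X1 y)" "\<And>y. even (X3 y - X1 y)"
    using xp by (metis dvd_minus_iff minus_diff_eq)+
  have sp: "\<And>x. even (S1 x + S2 x + S3 x)" using G by blast
  have ssurj: "\<And>s1 s2 s3. even (s1 + s2 + s3) \<Longrightarrow> \<exists>x. eps x = 0 \<and> S1 x = s1 \<and> S2 x = s2 \<and> S3 x = s3"
    using G by blast
  have yc: "\<And>x y. (\<And>u. 2 * x u = ?L y u) \<Longrightarrow> even (X1 y) \<Longrightarrow> even (X2 y) \<Longrightarrow> even (X3 y)
        \<Longrightarrow> 4 dvd (X1 y - X2 y) \<Longrightarrow> 4 dvd (X1 y - X3 y) \<Longrightarrow> x \<in> range ?L"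
    using G by blast
  obtain k2' where k2': "k2 = Suc k2'" using k(1) by (cases k2) auto
  obtain k3' where k3': "k3 = Suc k3'" using k(2) by (cases k3) auto
  define F2 where "F2 x = S2 x + 2^(k2-1) * S1 x" for x
  define F3 where "F3 x = S3 x + 2^(k3-1) * S1 x" for x
  define phi where "phi x = (F2 x mod int (2^(k2+1)), F3 x mod int (2^(k3+1)))" for x
  have linF2: "\<And>x x'. F2 (\<lambda>v. x v + x' v) = F2 x + F2 x'" by (simp add: F2_def lin1 lin2 algebra_simps)
  have linF3: "\<And>x x'. F3 (\<lambda>v. x v + x' v) = F3 x + F3 x'" by (simp add: F3_def lin1 lin3 algebra_simps)
  have hphi: "phi \<in> hom free_ab ?T"
    unfolding phi_def hom_paired
    using form_hom[where F=F2 and M="2^(k2+1)", OF linF2] form_hom[where F=F3 and M="2^(k3+1)", OF linF3] by simp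
  have grT: "group ?T" by (simp add: DirProd_group)
  have kill: "phi (?L y) = \<one>\<^bsub>?T\<^esub>" for y
  proof -
    have "2^(k2+1) dvd (2^k2*q2)*X2 y + 2^(k2-1) * ((2^1*P1)*X1 y)"
      by (rule form_kill) (use xp' odd k in auto)
    hence d2: "2^(k2+1) dvd F2 (?L y)" by (simp add: F2_def sl1 sl2 algebra_simps)
    have "2^(k3+1) dvd (2^k3*q3)*X3 y + 2^(k3-1) * ((2^1*P1)*X1 y)"
      by (rule form_kill) (use xp' odd k in auto)
    hence d3: "2^(k3+1) dvd F3 (?L y)" by (simp add: F3_def sl1 sl3 algebra_simps)
    show ?thesis using d2 d3 by (simp add: phi_def)
  qed
  have evE: "even ((2::int)^(k2-1) + 2^(k3-1))"
  proof -
    have "even (2^(k2-1)*q2 + 2^(k3-1)*q3)" using oddsum odd(1) by (metis add.assoc odd_add)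
    thus ?thesis using odd(2,3) by (auto simp: even_add even_mult_iff)
  qed
  have surj: "\<exists>x. eps x = 0 \<and> phi x = t" if tc: "t \<in> carrier ?T" for t
  proof -
    obtain i j where t: "t = (i,j)" "0 \<le> i" "i < 2^(k2+1)" "0 \<le> j" "j < 2^(k3+1)"
      using tc by (cases t) (auto simp: carrier_integer_mod_group)
    define s1 where "s1 = i + j"
    define s2 where "s2 = i - 2^(k2-1) * (i+j)"
    define s3 where "s3 = j - 2^(k3-1) * (i+j)"
    have "s1 + s2 + s3 = 2 * (i+j) - (2^(k2-1) + 2^(k3-1)) * (i+j)"
      by (simp add: s1_def s2_def s3_def algebra_simps)
    hence "even (s1 + s2 + s3)" using evE by simp
    then obtain x where x: "eps x = 0" "S1 x = s1" "S2 x = s2" "S3 x = s3" using ssurj by blast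
    have "F2 x = i" "F3 x = j" using x by (simp_all add: F2_def F3_def s1_def s2_def s3_def)
    hence "phi x = t" using t by (simp add: phi_def)
    thus ?thesis using x by blast
  qed
  have ord2: "x \<in> range ?L" if x2: "\<And>u. 2 * x u = ?L y u" and px: "phi x = \<one>\<^bsub>?T\<^esub>" for x y
  proof -
    have e1: "2 * S1 x = (2^1*P1) * X1 y" using twice_S[of S1 x "?L y", OF lin1 x2] sl1 by simp
    have e2: "2 * S2 x = (2^k2*q2) * X2 y" using twice_S[of S2 x "?L y", OF lin2 x2] sl2 by simp
    have e3: "2 * S3 x = (2^k3*q3) * X3 y" using twice_S[of S3 x "?L y", OF lin3 x2] sl3 by simp
    have f1: "S1 x = P1 * X1 y" using e1 by simp
    have f2: "S2 x = 2^(k2-1) * q2 * X2 y" using e2 k2' by simp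
    have f3: "S3 x = 2^(k3-1) * q3 * X3 y" using e3 k3' by simp
    have ev1: "even (X1 y)"
    proof (rule ccontr)
      assume o1: "odd (X1 y)"
      hence o2: "odd (X2 y)" and o3: "odd (X3 y)" using xp[of y] by auto
      have "even (P1 * X1 y + 2^(k2-1) * q2 * X2 y + 2^(k3-1) * q3 * X3 y)" using sp[of x] f1 f2 f3 by simp
      thus False using oddsum o1 o2 o3 by (auto simp: even_add even_mult_iff)
    qed
    have ev2: "even (X2 y)" using xp(1)[of y] ev1 by auto
    have ev3: "even (X3 y)" using xp(2)[of y] ev1 by auto
    have dF2: "2^(k2+1) dvd F2 x" and dF3: "2^(k3+1) dvd F3 x"
      using px by (simp_all add: phi_def mod_eq_0_iff_dvd)
    have d21: "4 dvd X2 y - X1 y"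
      by (rule form_ord2[of 1 k2 q2 P1 "S2 x" "X2 y" "S1 x" "X1 y"]) (use odd e1 e2 ev1 ev2 dF2 k in \<open>simp_all add: F2_def\<close>)
    have d31: "4 dvd X3 y - X1 y"
      by (rule form_ord2[of 1 k3 q3 P1 "S3 x" "X3 y" "S1 x" "X1 y"]) (use odd e1 e3 ev1 ev3 dF3 k in \<open>simp_all add: F3_def\<close>)
    have d12: "4 dvd X1 y - X2 y" using d21 by (metis dvd_minus_iff minus_diff_eq)
    have d13: "4 dvd X1 y - X3 y" using d31 by (metis dvd_minus_iff minus_diff_eq)
    show ?thesis by (rule yc[OF x2 ev1 ev2 ev3 d12 d13])
  qed
  have cardT: "card (carrier ?T) = 2 ^ ((k2+1) + (k3+1))"
    unfolding carrier_DirProd card_cartesian_product card_imod by (simp add: power_add)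
  show ?thesis
    by (rule main_generic[OF pos grT hphi kill surj ord2 cardT syl])
qed



lemma case3_wrap:
  fixes a b c :: nat and P1 qA qB n0 :: int and kA kB :: nat
  assumes g: "good3 a b c S1 S2 S3 X1 X2 X3 (2*P1) (2^kA*qA) (2^kB*qB)"
    and odd: "odd P1" "odd qA" "odd qB" and k: "kA \<ge> 1" "kB \<ge> 1"
    and sum: "2*P1 + 2^kA*qA + 2^kB*qB = 2*n0" "odd n0"
    and pos: "b + c > 0" "a + c > 0" "a + b > 0"
    and syl: "sylow_subgroup 2 (sandpile_group (cayley_laplacian (M_abc a b c))) P"
    and le: "kA \<le> kB"
  shows "(sandpile_group (cayley_laplacian (M_abc a b c)))\<lparr>carrier := P\<rparr> \<cong>
     integer_mod_group (2^(multiplicity 2 (order (sandpile_group (cayley_laplacian (M_abc a b c)))) - (kB+1)))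
       \<times>\<times> integer_mod_group (2^(kB+1))"
proof -
  obtain kA' where kA': "kA = Suc kA'" using k(1) by (cases kA) auto
  obtain kB' where kB': "kB = Suc kB'" using k(2) by (cases kB) auto
  have "2 * (P1 + 2^(kA-1)*qA + 2^(kB-1)*qB) = 2*n0" using sum(1) kA' kB' by (simp add: algebra_simps)
  hence "P1 + 2^(kA-1)*qA + 2^(kB-1)*qB = n0" by simp
  hence oddsum: "odd (P1 + 2^(kA-1)*qA + 2^(kB-1)*qB)" using sum(2) by simp
  have c: "(sandpile_group (cayley_laplacian (M_abc a b c)))\<lparr>carrier := P\<rparr> \<cong>
           integer_mod_group (2^(kA+1)) \<times>\<times> integer_mod_group (2^(kB+1))
     \<and> (kA+1) + (kB+1) = multiplicity 2 (order (sandpile_group (cayley_laplacian (M_abc a b c))))"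
    by (rule case3_gen[OF g k odd oddsum pos syl])
  hence "multiplicity 2 (order (sandpile_group (cayley_laplacian (M_abc a b c)))) - (kB+1) = kA + 1" by linarith
  thus ?thesis using c by simp
qed

lemma foldr_inv:
  assumes "\<forall>v\<in>set xs. Q v" "Q vzero" "\<And>u w. Q u \<Longrightarrow> Q w \<Longrightarrow> Q (vadd u w)"
  shows "Q (foldr vadd xs vzero)"
  using assms by (induction xs) auto

lemma gen_pos:
  assumes g: "generates (M_abc a b c)"
  shows "b + c > 0" "a + c > 0" "a + b > 0"
proof -
  show "b + c > 0"
  proof (rule ccontr)
    assume "\<not> b + c > 0"
    hence "b = 0" "c = 0" by auto
    obtain xs where xs: "set xs \<subseteq> set (M_abc a b c)" "(False,True) = foldr vadd xs vzero"
      using g unfolding generates_def by blast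
    have "set (M_abc a b c) \<subseteq> {(True,False)}" using \<open>b = 0\<close> \<open>c = 0\<close> by (auto simp: M_abc_def)
    hence "\<forall>v\<in>set xs. snd v = False" using xs(1) by auto
    hence "snd (foldr vadd xs vzero) = False"
      by (rule foldr_inv[where Q="\<lambda>v. snd v = False"]) (auto simp: vzero_def vadd_def)
    thus False using xs(2) by (metis snd_conv)
  qed
  show "a + c > 0"
  proof (rule ccontr)
    assume "\<not> a + c > 0"
    hence "a = 0" "c = 0" by auto
    obtain xs where xs: "set xs \<subseteq> set (M_abc a b c)" "(True,False) = foldr vadd xs vzero"
      using g unfolding generates_def by blast
    have "set (M_abc a b c) \<subseteq> {(False,True)}" using \<open>a = 0\<close> \<open>c = 0\<close> by (auto simp: M_abc_def)
    hence "\<forall>v\<in>set xs. fst v = False" using xs(1) by auto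
    hence "fst (foldr vadd xs vzero) = False"
      by (rule foldr_inv[where Q="\<lambda>v. fst v = False"]) (auto simp: vzero_def vadd_def)
    thus False using xs(2) by (metis fst_conv)
  qed
  show "a + b > 0"
  proof (rule ccontr)
    assume "\<not> a + b > 0"
    hence "a = 0" "b = 0" by auto
    obtain xs where xs: "set xs \<subseteq> set (M_abc a b c)" "(True,False) = foldr vadd xs vzero"
      using g unfolding generates_def by blast
    have "set (M_abc a b c) \<subseteq> {(True,True)}" using \<open>a = 0\<close> \<open>b = 0\<close> by (auto simp: M_abc_def)
    hence "\<forall>v\<in>set xs. fst v = snd v" using xs(1) by auto
    hence "fst (foldr vadd xs vzero) = snd (foldr vadd xs vzero)"
      by (rule foldr_inv[where Q="\<lambda>v. fst v = snd v"]) (auto simp: vzero_def vadd_def)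
    thus False using xs(2) by (metis fst_conv snd_conv)
  qed
qed

lemma dec2:
  fixes n :: nat
  assumes "n > 0"
  shows "\<exists>u. int n = 2^(multiplicity 2 n) * u \<and> odd u"
proof -
  obtain y where y: "n = 2 ^ multiplicity 2 n * y" "\<not> 2 dvd y"
    using multiplicity_decompose'[of n 2] assms by auto
  have "int n = int (2 ^ multiplicity 2 n * y)" by (rule arg_cong[OF y(1)])
  hence "int n = 2^(multiplicity 2 n) * int y" by simp
  moreover have "odd (int y)" using y(2) by simp
  ultimately show ?thesis by blast
qed

lemma mult_ge1: "n > 0 \<Longrightarrow> even (n::nat) \<Longrightarrow> multiplicity 2 n \<ge> 1"
  using multiplicity_gt_zero_iff[of n 2] by simp



theorem mainTheorem14:
  fixes a b c :: nat and P :: "(vec2 \<Rightarrow> int) set set"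
  assumes "gcd a (gcd b c) = 1"
    and "generates (M_abc a b c)"
    and "sylow_subgroup 2 (sandpile_group (cayley_laplacian (M_abc a b c))) P"
  defines "K \<equiv> sandpile_group (cayley_laplacian (M_abc a b c))"
  shows "(odd a \<and> even b \<and> even c \<longrightarrow>
            K\<lparr>carrier := P\<rparr> \<cong> integer_mod_group (2 ^ (multiplicity 2 (b + c) + 1)))
       \<and> (odd a \<and> odd b \<and> even c \<longrightarrow>
            K\<lparr>carrier := P\<rparr> \<cong> integer_mod_group (2 ^ (multiplicity 2 (a + b) + 1)))
       \<and> (odd a \<and> odd b \<and> odd c \<longrightarrow>
            (let f = max (multiplicity 2 (a + b)) (max (multiplicity 2 (b + c)) (multiplicity 2 (a + c))) + 1;
                 e = multiplicity 2 (order K) - f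
             in K\<lparr>carrier := P\<rparr> \<cong> integer_mod_group (2 ^ e) \<times>\<times> integer_mod_group (2 ^ f)))"
proof -
  have pos: "b + c > 0" "a + c > 0" "a + b > 0" using gen_pos[OF assms(2)] by auto
  note syl = assms(3)
  note base = good3_base[of a b c]
  define k1 where "k1 = multiplicity 2 (b + c)"
  define k2 where "k2 = multiplicity 2 (a + c)"
  define k3 where "k3 = multiplicity 2 (a + b)"
  obtain u1 where u1: "int (b+c) = 2^k1 * u1" "odd u1" using dec2[OF pos(1)] k1_def by blast
  obtain u2 where u2: "int (a+c) = 2^k2 * u2" "odd u2" using dec2[OF pos(2)] k2_def by blast
  obtain u3 where u3: "int (a+b) = 2^k3 * u3" "odd u3" using dec2[OF pos(3)] k3_def by blast
  have h1: "int b + int c = 2^k1 * u1" using u1 by simp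
  have h2: "int a + int c = 2^k2 * u2" using u2 by simp
  have h3: "int a + int b = 2^k3 * u3" using u3 by simp
  show ?thesis unfolding Let_def
  proof (intro conjI impI)
    assume hc: "odd a \<and> even b \<and> even c"
    have k1ge: "k1 \<ge> 1" unfolding k1_def by (rule mult_ge1) (use pos hc in auto)
    have o2: "odd (int a + int c)" and o3: "odd (int a + int b)" using hc by auto
    have g: "good3 a b c ss tt zz XX YY ZZ (2^k1 * u1) (int a + int c) (int a + int b)"
      using base unfolding h1 .
    show "K\<lparr>carrier := P\<rparr> \<cong> integer_mod_group (2 ^ (multiplicity 2 (b + c) + 1))"
      unfolding K_def k1_def[symmetric] by (rule case1_gen[OF g k1ge u1(2) o2 o3 pos syl])
  next
    assume hc: "odd a \<and> odd b \<and> even c"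
    have k3ge: "k3 \<ge> 1" unfolding k3_def by (rule mult_ge1) (use pos hc in auto)
    have o1: "odd (int b + int c)" and o2: "odd (int a + int c)" using hc by auto
    have g: "good3 a b c zz ss tt ZZ XX YY (2^k3 * u3) (int b + int c) (int a + int c)"
      using good3_swap12[OF good3_swap23[OF base]] unfolding h3 .
    show "K\<lparr>carrier := P\<rparr> \<cong> integer_mod_group (2 ^ (multiplicity 2 (a + b) + 1))"
      unfolding K_def k3_def[symmetric] by (rule case1_gen[OF g k3ge u3(2) o1 o2 pos syl])
  next
    assume hc: "odd a \<and> odd b \<and> odd c"
    have k1ge: "k1 \<ge> 1" unfolding k1_def by (rule mult_ge1) (use pos hc in auto)
    have k2ge: "k2 \<ge> 1" unfolding k2_def by (rule mult_ge1) (use pos hc in auto)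
    have k3ge: "k3 \<ge> 1" unfolding k3_def by (rule mult_ge1) (use pos hc in auto)
    define n0 where "n0 = int a + int b + int c"
    have on0: "odd n0" using hc by (simp add: n0_def)
    have sum: "2^k1 * u1 + 2^k2 * u2 + 2^k3 * u3 = 2 * n0" unfolding h1[symmetric] h2[symmetric] h3[symmetric] n0_def by simp
    have one: "k1 = 1 \<or> k2 = 1 \<or> k3 = 1"
    proof (rule ccontr)
      assume "\<not> (k1 = 1 \<or> k2 = 1 \<or> k3 = 1)"
      hence "k1 \<ge> 2" "k2 \<ge> 2" "k3 \<ge> 2" using k1ge k2ge k3ge by auto
      then obtain j1 j2 j3 where j: "k1 = j1 + 2" "k2 = j2 + 2" "k3 = j3 + 2"
        by (metis add.commute le_add_diff_inverse)
      have "2 * n0 = 4 * (2^j1 * u1 + 2^j2 * u2 + 2^j3 * u3)" using sum j by (simp add: power_add algebra_simps)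
      hence "even n0" by presburger
      thus False using on0 by simp
    qed
    define KK where "KK = K\<lparr>carrier := P\<rparr>"
    define v where "v = multiplicity 2 (order K)"
    have fm: "max (multiplicity 2 (a + b)) (max (multiplicity 2 (b + c)) (multiplicity 2 (a + c))) = max k3 (max k1 k2)"
      by (simp add: k1_def k2_def k3_def)
    have "KK \<cong> integer_mod_group (2 ^ (v - (max k3 (max k1 k2) + 1))) \<times>\<times> integer_mod_group (2 ^ (max k3 (max k1 k2) + 1))"
    proof -
      consider "k1 = 1" | "k2 = 1" | "k3 = 1" using one by blast
      thus ?thesis
      proof cases
        case 1
        have h1': "int b + int c = 2 * u1" using h1 1 by simp
        show ?thesis
        proof (cases "k2 \<le> k3")
          case True
          have g: "good3 a b c ss tt zz XX YY ZZ (2 * u1) (2^k2 * u2) (2^k3 * u3)"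
            using base unfolding h1' h2 h3 .
          have s: "2 * u1 + 2^k2 * u2 + 2^k3 * u3 = 2 * n0" using sum 1 by simp
          have "max k3 (max k1 k2) = k3" using True 1 k2ge by simp
          thus ?thesis using case3_wrap[OF g u1(2) u2(2) u3(2) k2ge k3ge s on0 pos syl True]
            by (simp add: KK_def v_def K_def)
        next
          case False
          have g: "good3 a b c ss zz tt XX ZZ YY (2 * u1) (2^k3 * u3) (2^k2 * u2)"
            using good3_swap23[OF base] unfolding h1' h2 h3 .
          have s: "2 * u1 + 2^k3 * u3 + 2^k2 * u2 = 2 * n0" using sum 1 by simp
          have le: "k3 \<le> k2" using False by simp
          have "max k3 (max k1 k2) = k2" using False 1 k2ge by simp
          thus ?thesis using case3_wrap[OF g u1(2) u3(2) u2(2) k3ge k2ge s on0 pos syl le]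
            by (simp add: KK_def v_def K_def)
        qed
      next
        case 2
        have h2': "int a + int c = 2 * u2" using h2 2 by simp
        show ?thesis
        proof (cases "k1 \<le> k3")
          case True
          have g: "good3 a b c tt ss zz YY XX ZZ (2 * u2) (2^k1 * u1) (2^k3 * u3)"
            using good3_swap12[OF base] unfolding h1 h2' h3 .
          have s: "2 * u2 + 2^k1 * u1 + 2^k3 * u3 = 2 * n0" using sum 2 by simp
          have "max k3 (max k1 k2) = k3" using True 2 k1ge by simp
          thus ?thesis using case3_wrap[OF g u2(2) u1(2) u3(2) k1ge k3ge s on0 pos syl True]
            by (simp add: KK_def v_def K_def)
        next
          case False
          have g: "good3 a b c tt zz ss YY ZZ XX (2 * u2) (2^k3 * u3) (2^k1 * u1)"
            using good3_swap23[OF good3_swap12[OF base]] unfolding h1 h2' h3 .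
          have s: "2 * u2 + 2^k3 * u3 + 2^k1 * u1 = 2 * n0" using sum 2 by simp
          have le: "k3 \<le> k1" using False by simp
          have "max k3 (max k1 k2) = k1" using False 2 k1ge by simp
          thus ?thesis using case3_wrap[OF g u2(2) u3(2) u1(2) k3ge k1ge s on0 pos syl le]
            by (simp add: KK_def v_def K_def)
        qed
      next
        case 3
        have h3': "int a + int b = 2 * u3" using h3 3 by simp
        show ?thesis
        proof (cases "k1 \<le> k2")
          case True
          have g: "good3 a b c zz ss tt ZZ XX YY (2 * u3) (2^k1 * u1) (2^k2 * u2)"
            using good3_swap12[OF good3_swap23[OF base]] unfolding h1 h2 h3' .
          have s: "2 * u3 + 2^k1 * u1 + 2^k2 * u2 = 2 * n0" using sum 3 by simp
          have "max k3 (max k1 k2) = k2" using True 3 k2ge by simp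
          thus ?thesis using case3_wrap[OF g u3(2) u1(2) u2(2) k1ge k2ge s on0 pos syl True]
            by (simp add: KK_def v_def K_def)
        next
          case False
          have g: "good3 a b c zz tt ss ZZ YY XX (2 * u3) (2^k2 * u2) (2^k1 * u1)"
            using good3_swap23[OF good3_swap12[OF good3_swap23[OF base]]] unfolding h1 h2 h3' .
          have s: "2 * u3 + 2^k2 * u2 + 2^k1 * u1 = 2 * n0" using sum 3 by simp
          have le: "k2 \<le> k1" using False by simp
          have "max k3 (max k1 k2) = k1" using False 3 k1ge by simp
          thus ?thesis using case3_wrap[OF g u3(2) u2(2) u1(2) k2ge k1ge s on0 pos syl le]
            by (simp add: KK_def v_def K_def)
        qed
      qed
    qed
    thus "K\<lparr>carrier := P\<rparr> \<cong> integer_mod_group (2 ^ (multiplicity 2 (order K) -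
        (max (multiplicity 2 (a + b)) (max (multiplicity 2 (b + c)) (multiplicity 2 (a + c))) + 1)))
        \<times>\<times> integer_mod_group (2 ^ (max (multiplicity 2 (a + b)) (max (multiplicity 2 (b + c)) (multiplicity 2 (a + c))) + 1))"
      unfolding fm KK_def v_def .
  qed
qed


end
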